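(* Let $D\ge 1$ and $k\ge 0$ be integers, let $\mathbf{X}\in\mathbb{C}^{D\times m}$ be a snapshot matrix (whose columns are the state vectors $\mathbf{x}_0,\dots,\mathbf{x}_{m-1}\in\mathbb{C}^D$) with full singular value decomposition $\mathbf{X}=\mathbf{U}\boldsymbol{\Sigma}\mathbf{V}^*$, where $\mathbf{U}\in\mathbb{C}^{D\times D}$ is unitary. Let $\boldsymbol{\Omega}_0^{(x)},\dots,\boldsymbol{\Omega}_k^{(x)}\in\mathbb{C}^{D\times D}$ be arbitrary matrices and define $\boldsymbol{\Omega}_i^{(g)}=\mathbf{U}^*\boldsymbol{\Omega}_i^{(x)}\mathbf{U}$ for $i=0,\dots,k$. Define the $(k+1)D\times(k+1)D$ block companion matrices $$\mathbf{C}_x=\begin{bmatrix}\boldsymbol{\Omega}_0^{(x)} & \boldsymbol{\Omega}_1^{(x)} & \cdots & \boldsymbol{\Omega}_{k-1}^{(x)} & \boldsymbol{\Omega}_k^{(x)}\\ \mathbf{I} & \mathbf{0} & \cdots & \mathbf{0} & \mathbf{0}\\ \mathbf{0} & \mathbf{I} & \cdots & \mathbf{0} & \mathbf{0}\\ \vdots & & \ddots & & \vdots\\ \mathbf{0} & \cdots & \mathbf{0} & \mathbf{I} & \mathbf{0}\end{bmatrix},\qquad \mathbf{C}_g=\begin{bmatrix}\boldsymbol{\Omega}_0^{(g)} & \boldsymbol{\Omega}_1^{(g)} & \cdots & \boldsymbol{\Omega}_{k-1}^{(g)} & \boldsymbol{\Omega}_k^{(g)}\\ \mathbf{I} & \mathbf{0}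 & \cdots & \mathbf{0} & \mathbf{0}\\ \mathbf{0} & \mathbf{I} & \cdots & \mathbf{0} & \mathbf{0}\\ \vdots & & \ddots & & \vdots\\ \mathbf{0} & \cdots & \mathbf{0} & \mathbf{I} & \mathbf{0}\end{bmatrix},$$ where $\mathbf{I}$ and $\mathbf{0}$ are the $D\times D$ identity and zero matrices (for $k=0$ these are just $\boldsymbol{\Omega}_0^{(x)}$ and $\boldsymbol{\Omega}_0^{(g)}$). Let $(\lambda,\mathbf{w})$ be an eigenpair of $\mathbf{C}_g$ with $\lambda\neq 0$, i.e. $\mathbf{w}\neq 0$ and $\mathbf{C}_g\mathbf{w}=\lambda\mathbf{w}$, and write $\mathbf{w}=[\mathbf{w}^0;\mathbf{w}^1;\dots;\mathbf{w}^k]$ with blocks $\mathbf{w}^j\in\mathbb{C}^D$. Set $\boldsymbol{\phi}^0=\mathbf{U}\mathbf{w}^0$ and $\boldsymbol{\phi}=[\boldsymbol{\phi}^0;\ \lambda^{-1}\boldsymbol{\phi}^0;\ \dots;\ \lambda^{-k}\boldsymbol{\phi}^0]\in\mathbb{C}^{(k+1)D}$ (blocks stacked vertically). Then $(\lambda,\boldsymbol{\phi})$ is an eigenpair of $\mathbf{C}_x$, i.e. $\boldsymbol{\phi}\neq 0$ and $\mathbf{C}_x\boldsymbol{\phi}=\lambda\boldsymbol{\phi}$.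
   Context: This is the setting of the Mori–Zwanzig modal decomposition: states evolve by the memory recursion $\mathbf{x}_{n+1}=\boldsymbol{\Omega}_0^{(x)}\mathbf{x}_n+\dots+\boldsymbol{\Omega}_k^{(x)}\mathbf{x}_{n-k}$ with linear Mori–Zwanzig operators $\boldsymbol{\Omega}_i^{(x)}$ acting on state space, and the observables are $\mathbf{g}(\mathbf{x}_n)=\mathbf{U}^*\mathbf{x}_n$ (projections onto the POD modes, i.e. left singular vectors of the snapshot matrix), which evolve by the same recursion with the operators $\boldsymbol{\Omega}_i^{(g)}=\mathbf{U}^*\boldsymbol{\Omega}_i^{(x)}\mathbf{U}$. $\mathbf{U}^*$ denotes the conjugate transpose. *)

theory Defs
  imports "Jordan_Normal_Form.Matrix"
begin

definition adj :: "complex mat \<Rightarrow> complex mat" where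
  "adj A = mat (dim_col A) (dim_row A) (\<lambda>(i,j). cnj (A $$ (j,i)))"

definition unitary :: "nat \<Rightarrow> complex mat \<Rightarrow> bool" where
  "unitary n U \<longleftrightarrow> U \<in> carrier_mat n n \<and> adj U * U = 1\<^sub>m n \<and> U * adj U = 1\<^sub>m n"

definition full_svd :: "nat \<Rightarrow> nat \<Rightarrow> complex mat \<Rightarrow> complex mat \<Rightarrow> complex mat \<Rightarrow> complex mat \<Rightarrow> bool" where
  "full_svd D m X U S V \<longleftrightarrow>
     X \<in> carrier_mat D m \<and> unitary D U \<and> unitary m V \<and> S \<in> carrier_mat D m \<and>
     (\<forall>i<D. \<forall>j<m. i \<noteq> j \<longrightarrow> S $$ (i,j) = 0) \<and>
     (\<forall>i<min D m. S $$ (i,i) \<in> \<real> \<and> Re (S $$ (i,i)) \<ge> 0) \<and>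
     (\<forall>i j. i \<le> j \<and> j < min D m \<longrightarrow> Re (S $$ (j,j)) \<le> Re (S $$ (i,i))) \<and>
     X = U * S * adj V"

(* (k+1)D x (k+1)D block companion matrix with first block row Om 0, ..., Om k,
   identity blocks on the block subdiagonal, zeros elsewhere *)
definition block_companion :: "nat \<Rightarrow> nat \<Rightarrow> (nat \<Rightarrow> complex mat) \<Rightarrow> complex mat" where
  "block_companion D k Om = mat ((k+1)*D) ((k+1)*D) (\<lambda>(i,j).
     if i < D then Om (j div D) $$ (i, j mod D)
     else if i div D = j div D + 1 \<and> i mod D = j mod D then 1 else 0)"

definition vblock :: "nat \<Rightarrow> complex vec \<Rightarrow> nat \<Rightarrow> complex vec" where
  "vblock D w j = vec D (\<lambda>r. w $ (j*D + r))"

definition geom_stack :: "nat \<Rightarrow> nat \<Rightarrow> complex \<Rightarrow> complex vec \<Rightarrow> complex vec" where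
  "geom_stack D k c p = vec ((k+1)*D) (\<lambda>i. (inverse c) ^ (i div D) * p $ (i mod D))"

end

theory Submission imports Defs begin


lemma sum_blocks:
  fixes g :: "nat \<Rightarrow> 'a::comm_monoid_add"
  shows "sum g {..<n*D} = (\<Sum>b<n. \<Sum>r<D. g (b*D + r))"
proof -
  have "sum g {..<n*D} = (\<Sum>b<n. sum g {b*D..<b*D+D})"
    by (rule sum.nat_group[symmetric])
  also have "\<dots> = (\<Sum>b<n. \<Sum>r<D. g (b*D + r))"
  proof (rule sum.cong[OF refl])
    fix b
    have "sum g {b*D..<b*D+D} = sum (\<lambda>r. g (r + b*D)) {0..<D}"
      using sum.shift_bounds_nat_ivl[of g 0 "b*D" D] by (simp add: add.commute)
    then show "sum g {b*D..<b*D+D} = (\<Sum>r<D. g (b*D + r))"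
      by (simp add: atLeast0LessThan add.commute)
  qed
  finally show ?thesis .
qed

lemma bc_top:
  assumes "v \<in> carrier_vec ((k+1)*D)" "i < D" "\<And>b. b \<le> k \<Longrightarrow> Om b \<in> carrier_mat D D"
  shows "(block_companion D k Om *\<^sub>v v) $ i = (\<Sum>b<k+1. (Om b *\<^sub>v vblock D v b) $ i)"
proof -
  have "(block_companion D k Om *\<^sub>v v) $ i = (\<Sum>j<(k+1)*D. Om (j div D) $$ (i, j mod D) * v $ j)"
    using assms(1,2) unfolding block_companion_def
    by (auto simp: scalar_prod_def row_def lessThan_atLeast0 intro!: sum.cong)
  also have "\<dots> = (\<Sum>b<k+1. \<Sum>r<D. Om b $$ (i, r) * v $ (b*D+r))"
    by (subst sum_blocks) (auto intro!: sum.cong)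
  also have "\<dots> = (\<Sum>b<k+1. (Om b *\<^sub>v vblock D v b) $ i)"
  proof (rule sum.cong[OF refl])
    fix b assume "b \<in> {..<k+1}"
    then have "Om b \<in> carrier_mat D D" using assms(3) by auto
    then show "(\<Sum>r<D. Om b $$ (i, r) * v $ (b*D+r)) = (Om b *\<^sub>v vblock D v b) $ i"
      using assms(2) by (auto simp: vblock_def scalar_prod_def row_def lessThan_atLeast0 intro!: sum.cong)
  qed
  finally show ?thesis .
qed

lemma bc_low:
  assumes "v \<in> carrier_vec ((k+1)*D)" "D \<le> i" "i < (k+1)*D"
  shows "(block_companion D k Om *\<^sub>v v) $ i = v $ (i - D)"
proof -
  have D: "D > 0" using assms by (cases D) auto
  have eq: "(i div D = Suc (j div D) \<and> i mod D = j mod D) \<longleftrightarrow> j = i - D" for j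
  proof
    assume h: "i div D = Suc (j div D) \<and> i mod D = j mod D"
    have "i = (j div D + 1) * D + j mod D" using h div_mult_mod_eq[of i D] by simp
    also have "\<dots> = j + D" using div_mult_mod_eq[of j D] by (simp add: algebra_simps)
    finally show "j = i - D" by simp
  next
    assume "j = i - D"
    then have "i = j + D" using assms by simp
    then show "i div D = Suc (j div D) \<and> i mod D = j mod D" using D by simp
  qed
  have cond: "\<And>j. (if j = i - D then 1 else 0) * v $ j = (if j = i - D then v $ j else 0)" by simp
  have "(block_companion D k Om *\<^sub>v v) $ i = (\<Sum>j<(k+1)*D. (if j = i - D then v $ j else 0))"
    using assms unfolding block_companion_def
    by (auto simp: cond scalar_prod_def row_def lessThan_atLeast0 eq intro!: sum.cong)
  also have "\<dots> = v $ (i - D)" using assms by simp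
  finally show ?thesis .
qed


primrec Sm :: "(nat \<Rightarrow> complex mat) \<Rightarrow> complex \<Rightarrow> nat \<Rightarrow> nat \<Rightarrow> complex mat" where
  "Sm Om c D 0 = 0\<^sub>m D D"
| "Sm Om c D (Suc n) = Sm Om c D n + (c ^ n) \<cdot>\<^sub>m Om n"

lemma Sm_carrier: "(\<And>b. b < n \<Longrightarrow> Om b \<in> carrier_mat D D) \<Longrightarrow> Sm Om c D n \<in> carrier_mat D D"
  by (induction n) auto

lemma Sm_mv:
  assumes "\<And>b. b < n \<Longrightarrow> Om b \<in> carrier_mat D D" "x \<in> carrier_vec D" "i < D"
  shows "(Sm Om c D n *\<^sub>v x) $ i = (\<Sum>b<n. c ^ b * (Om b *\<^sub>v x) $ i)"
  using assms
proof (induction n)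
  case 0
  then show ?case by auto
next
  case (Suc n)
  have c1: "Sm Om c D n \<in> carrier_mat D D" using Suc.prems by (intro Sm_carrier) auto
  have c2: "Om n \<in> carrier_mat D D" using Suc.prems by auto
  have "(Sm Om c D (Suc n) *\<^sub>v x) $ i = (Sm Om c D n *\<^sub>v x) $ i + ((c ^ n \<cdot>\<^sub>m Om n) *\<^sub>v x) $ i"
    using c1 c2 Suc.prems carrier_matD[OF c2] by (simp add: add_mult_distrib_mat_vec[of _ D D] del: index_mult_mat_vec)
  also have "((c ^ n \<cdot>\<^sub>m Om n) *\<^sub>v x) $ i = c ^ n * (Om n *\<^sub>v x) $ i"
    using c2 carrier_matD[OF c2] Suc.prems by (simp add: scalar_prod_def sum_distrib_left mult.assoc)
  finally show ?case using Suc by simp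
qed

lemma Sm_conj:
  assumes "U \<in> carrier_mat D D" "\<And>b. b < n \<Longrightarrow> Om b \<in> carrier_mat D D"
  shows "Sm (\<lambda>b. adj U * Om b * U) c D n = adj U * Sm Om c D n * U"
  using assms(2)
proof (induction n)
  case 0
  have aU: "adj U \<in> carrier_mat D D" using assms(1) by (auto simp: adj_def)
  show ?case using aU assms(1) by simp
next
  case (Suc n)
  have aU: "adj U \<in> carrier_mat D D" using assms(1) by (auto simp: adj_def)
  have c1: "Sm Om c D n \<in> carrier_mat D D" using Suc.prems by (intro Sm_carrier) auto
  have c2: "Om n \<in> carrier_mat D D" using Suc.prems by auto
  have "adj U * Sm Om c D (Suc n) * U = (adj U * Sm Om c D n + adj U * (c ^ n \<cdot>\<^sub>m Om n)) * U"
    using aU c1 c2 by (simp add: mult_add_distrib_mat[of _ D D])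
  also have "\<dots> = adj U * Sm Om c D n * U + adj U * (c ^ n \<cdot>\<^sub>m Om n) * U"
    using aU c1 c2 assms(1) by (simp add: add_mult_distrib_mat[of _ D D])
  also have "adj U * (c ^ n \<cdot>\<^sub>m Om n) * U = c ^ n \<cdot>\<^sub>m (adj U * Om n * U)"
    using aU c2 assms(1) by (simp add: mult_smult_distrib[of _ D D] mult_smult_assoc_mat[of _ D D])
  finally show ?case using Suc by simp
qed

theorem theorem1:
  fixes D k m :: nat
    and X U S V :: "complex mat"
    and Omx :: "nat \<Rightarrow> complex mat"
    and lam :: complex and w :: "complex vec"
  assumes "D \<ge> 1"
    and "full_svd D m X U S V"
    and "\<And>i. i \<le> k \<Longrightarrow> Omx i \<in> carrier_mat D D"
    and "lam \<noteq> 0"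
    and "w \<in> carrier_vec ((k+1)*D)"
    and "w \<noteq> 0\<^sub>v ((k+1)*D)"
    and "block_companion D k (\<lambda>i. adj U * Omx i * U) *\<^sub>v w = lam \<cdot>\<^sub>v w"
  shows "geom_stack D k lam (U *\<^sub>v vblock D w 0) \<noteq> 0\<^sub>v ((k+1)*D)
       \<and> block_companion D k Omx *\<^sub>v geom_stack D k lam (U *\<^sub>v vblock D w 0)
           = lam \<cdot>\<^sub>v geom_stack D k lam (U *\<^sub>v vblock D w 0)"
proof -
  define il where "il = inverse lam"
  define w0 where "w0 = vblock D w 0"
  define p where "p = U *\<^sub>v w0"
  define g where "g = geom_stack D k lam p"
  define Og where "Og = (\<lambda>i. adj U * Omx i * U)"
  have Dpos: "D > 0" using assms(1) by simp
  have lil: "lam * il = 1" using assms(4) by (simp add: il_def)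
  have Uc: "U \<in> carrier_mat D D" and UU1: "adj U * U = 1\<^sub>m D" and UU2: "U * adj U = 1\<^sub>m D"
    using assms(2) by (auto simp: full_svd_def unitary_def)
  have aU: "adj U \<in> carrier_mat D D" using Uc by (auto simp: adj_def)
  have Ogc: "\<And>b. b \<le> k \<Longrightarrow> Og b \<in> carrier_mat D D" using assms(3) aU Uc by (auto simp: Og_def)
  have w0c: "w0 \<in> carrier_vec D" by (simp add: w0_def vblock_def)
  have pc: "p \<in> carrier_vec D" using Uc w0c by (simp add: p_def)
  have eig: "(block_companion D k Og *\<^sub>v w) $ i = lam * w $ i" if "i < (k+1)*D" for i
    using assms(7) assms(5) that by (simp add: Og_def)
  have rec: "w $ (i - D) = lam * w $ i" if "D \<le> i" "i < (k+1)*D" for i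
    using eig[OF that(2)] bc_low[OF assms(5) that] by simp
  have wb: "w $ (b*D+r) = il ^ b * w $ r" if "b \<le> k" "r < D" for b r
    using that(1)
  proof (induction b)
    case 0 then show ?case by simp
  next
    case (Suc b)
    have "Suc b * D + r < (k+1)*D"
    proof -
      have "Suc b * D + r < Suc b * D + D" using that(2) by simp
      also have "\<dots> = (Suc b + 1) * D" by simp
      also have "\<dots> \<le> (k+1)*D" using Suc.prems by (intro mult_right_mono) auto
      finally show ?thesis .
    qed
    then have "w $ (b*D+r) = lam * w $ (Suc b * D + r)"
      using rec[of "Suc b * D + r"] by simp
    then have "w $ (Suc b * D + r) = il * w $ (b*D+r)"
      using assms(4) by (simp add: il_def field_simps)
    then show ?case using Suc by simp
  qed
  have vbw: "vblock D w b = il ^ b \<cdot>\<^sub>v w0" if "b \<le> k" for b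
    using wb[OF that] by (intro eq_vecI) (auto simp: vblock_def w0_def)
  have w0nz: "w0 \<noteq> 0\<^sub>v D"
  proof
    assume z: "w0 = 0\<^sub>v D"
    have "w = 0\<^sub>v ((k+1)*D)"
    proof (rule eq_vecI)
      fix i assume "i < dim_vec (0\<^sub>v ((k+1)*D))"
      then have i: "i < (k+1)*D" by simp
      have "i div D < k+1" using i by (intro less_mult_imp_div_less)
      then have "i div D \<le> k" by simp
      moreover have "i = i div D * D + i mod D" by simp
      ultimately have "w $ i = il ^ (i div D) * w $ (i mod D)"
        using wb[of "i div D" "i mod D"] Dpos by simp
      also have "w $ (i mod D) = w0 $ (i mod D)" using Dpos by (simp add: w0_def vblock_def)
      finally show "w $ i = 0\<^sub>v ((k+1)*D) $ i" using z i Dpos by simp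
    qed (use assms(5) in simp)
    then show False using assms(6) by simp
  qed
  have SX: "Sm Omx il D (k+1) \<in> carrier_mat D D" using assms(3) by (intro Sm_carrier) auto
  have Sg: "Sm Og il D (k+1) *\<^sub>v w0 = lam \<cdot>\<^sub>v w0"
  proof (rule eq_vecI)
    fix i assume "i < dim_vec (lam \<cdot>\<^sub>v w0)"
    then have i: "i < D" using w0c by simp
    have "(Sm Og il D (k+1) *\<^sub>v w0) $ i = (\<Sum>b<k+1. il ^ b * (Og b *\<^sub>v w0) $ i)"
      using Ogc w0c i by (intro Sm_mv) auto
    also have "\<dots> = (\<Sum>b<k+1. (Og b *\<^sub>v vblock D w b) $ i)"
    proof (rule sum.cong[OF refl])
      fix b assume "b \<in> {..<k+1}"
      then have b: "b \<le> k" by simp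
      show "il ^ b * (Og b *\<^sub>v w0) $ i = (Og b *\<^sub>v vblock D w b) $ i"
        using vbw[OF b] mult_mat_vec[OF Ogc[OF b] w0c] Ogc[OF b] w0c i by simp
    qed
    also have "\<dots> = (block_companion D k Og *\<^sub>v w) $ i"
      using bc_top[OF assms(5) i, of Og] Ogc by simp
    also have "\<dots> = lam * w $ i" using eig i by simp
    also have "w $ i = w0 $ i" using i by (simp add: w0_def vblock_def)
    finally show "(Sm Og il D (k+1) *\<^sub>v w0) $ i = (lam \<cdot>\<^sub>v w0) $ i" using i w0c by simp
  qed (use SX w0c Ogc carrier_matD[OF Ogc[of k]] in \<open>simp add: Sm_carrier\<close>)
  have Sg2: "Sm Og il D (k+1) = adj U * Sm Omx il D (k+1) * U"
    unfolding Og_def using Uc assms(3) by (intro Sm_conj) auto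
  define Sx where "Sx = Sm Omx il D (k+1)"
  have Sxc: "Sx \<in> carrier_mat D D" using SX by (simp add: Sx_def)
  have Sp: "Sx *\<^sub>v p = lam \<cdot>\<^sub>v p"
  proof -
    have "U *\<^sub>v (Sm Og il D (k+1) *\<^sub>v w0) = U *\<^sub>v (lam \<cdot>\<^sub>v w0)" using Sg by simp
    also have "U *\<^sub>v (lam \<cdot>\<^sub>v w0) = lam \<cdot>\<^sub>v p" using mult_mat_vec[OF Uc w0c] by (simp add: p_def)
    also have "Sm Og il D (k+1) = adj U * Sx * U" using Sg2 by (simp add: Sx_def)
    also have "U *\<^sub>v (adj U * Sx * U *\<^sub>v w0) = (U * (adj U * Sx * U)) *\<^sub>v w0"
      using Uc aU Sxc w0c by (intro assoc_mult_mat_vec[symmetric]) auto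
    also have "U * (adj U * Sx * U) = (U * adj U) * Sx * U"
      using Uc aU Sxc by (simp add: assoc_mult_mat[of _ D D _ D _ D])
    also have "\<dots> = Sx * U" using UU2 Sxc by simp
    also have "(Sx * U) *\<^sub>v w0 = Sx *\<^sub>v p" using Sxc Uc w0c by (simp add: p_def)
    finally show ?thesis .
  qed
  have gc: "g \<in> carrier_vec ((k+1)*D)" by (simp add: g_def geom_stack_def)
  have gi: "g $ i = il ^ (i div D) * p $ (i mod D)" if "i < (k+1)*D" for i
    using that by (simp add: g_def geom_stack_def il_def)
  have vbg: "vblock D g b = il ^ b \<cdot>\<^sub>v p" if "b \<le> k" for b
  proof (rule eq_vecI)
    fix r assume "r < dim_vec (il ^ b \<cdot>\<^sub>v p)"
    then have r: "r < D" using pc by simp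
    have "b*D + r < (k+1)*D"
    proof -
      have "b * D + r < b * D + D" using r by simp
      also have "\<dots> = (b + 1) * D" by simp
      also have "\<dots> \<le> (k+1)*D" using that by (intro mult_right_mono) auto
      finally show ?thesis .
    qed
    then show "vblock D g b $ r = (il ^ b \<cdot>\<^sub>v p) $ r"
      using gi[of "b*D+r"] r pc by (simp add: vblock_def)
  qed (use pc in \<open>simp add: vblock_def\<close>)
  have gnz: "g \<noteq> 0\<^sub>v ((k+1)*D)"
  proof
    assume z: "g = 0\<^sub>v ((k+1)*D)"
    have "p = 0\<^sub>v D"
    proof (rule eq_vecI)
      fix r assume "r < dim_vec (0\<^sub>v D)"
      then have r: "r < D" by simp
      then have "r < (k+1)*D" by (metis add.commute less_le_trans mult_Suc nat_le_iff_add plus_1_eq_Suc)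
      then show "p $ r = 0\<^sub>v D $ r" using gi[of r] z r by simp
    qed (use pc in simp)
    then have "adj U *\<^sub>v p = 0\<^sub>v D" using aU by (intro eq_vecI) (auto simp: scalar_prod_def)
    moreover have "adj U *\<^sub>v p = w0" using aU Uc w0c UU1 by (simp add: p_def assoc_mult_mat_vec[symmetric, of _ D D _ D])
    ultimately show False using w0nz by simp
  qed
  have geig: "block_companion D k Omx *\<^sub>v g = lam \<cdot>\<^sub>v g"
  proof (rule eq_vecI)
    fix i assume "i < dim_vec (lam \<cdot>\<^sub>v g)"
    then have i: "i < (k+1)*D" using gc by simp
    show "(block_companion D k Omx *\<^sub>v g) $ i = (lam \<cdot>\<^sub>v g) $ i"
    proof (cases "i < D")
      case True
      have "(block_companion D k Omx *\<^sub>v g) $ i = (\<Sum>b<k+1. (Omx b *\<^sub>v vblock D g b) $ i)"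
        using bc_top[OF gc True, of Omx] assms(3) by simp
      also have "\<dots> = (\<Sum>b<k+1. il ^ b * (Omx b *\<^sub>v p) $ i)"
      proof (rule sum.cong[OF refl])
        fix b assume "b \<in> {..<k+1}"
        then have b: "b \<le> k" by simp
        show "(Omx b *\<^sub>v vblock D g b) $ i = il ^ b * (Omx b *\<^sub>v p) $ i"
          using vbg[OF b] mult_mat_vec[OF assms(3)[OF b] pc] assms(3)[OF b] pc True by simp
      qed
      also have "\<dots> = (Sx *\<^sub>v p) $ i"
        unfolding Sx_def using assms(3) pc True by (intro Sm_mv[symmetric]) auto
      also have "\<dots> = lam * p $ i" using Sp True pc by simp
      also have "\<dots> = lam * g $ i" using gi[OF i] True by simp
      finally show ?thesis using i gc by simp
    next
      case False
      then have Di: "D \<le> i" by simp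
      have "(block_companion D k Omx *\<^sub>v g) $ i = g $ (i - D)" using bc_low[OF gc Di i] .
      also have "\<dots> = il ^ ((i - D) div D) * p $ ((i - D) mod D)" using gi[of "i - D"] i by simp
      also have "(i - D) div D = i div D - 1" using Di Dpos by (simp add: le_div_geq)
      also have "(i - D) mod D = i mod D" using Di Dpos by (simp add: le_mod_geq)
      also have "il ^ (i div D - 1) = lam * il ^ (i div D)"
      proof -
        have "i div D \<ge> 1" using Di Dpos div_greater_zero_iff[of i D] by simp
        then obtain t where t: "i div D = Suc t" by (cases "i div D") auto
        show ?thesis using lil by (simp add: t mult.assoc[symmetric])
      qed
      finally show ?thesis using gi[OF i] i gc by simp
    qed
  qed (use gc in \<open>simp add: block_companion_def\<close>)
  show ?thesis using gnz geig by (simp add: g_def p_def w0_def)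
qed

end
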